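(* Consider the iterative minimum repairing algorithm IMR($p$) described in the context, but run with a static parameter: instead of re-estimating the parameter in step (S1), a fixed vector $\phi=(\phi_1,\dots,\phi_p)\in\mathbb{R}^p$ is used in every iteration, i.e. $\phi^{(k)}=\phi$ for all $k\ge 0$. Then the repair result converges, i.e. $$\lim_{k\to+\infty}\sum_{i=1}^n\left(y_i^{(k+1)}-y_i^{(k)}\right)=0.$$
   Context: Let $n\ge 1$ and let $x=(x_1,\dots,x_n)\in\mathbb{R}^n$ be an observed time series. A set $L\subseteq\{1,\dots,n\}$ of labeled indices is given, together with labeled (true) values $y^{(0)}_t$ for $t\in L$. For $t\notin L$ put $y^{(0)}_t=x_t$. Fix an order $p\ge 1$ and a threshold $\tau\ge 0$. The algorithm IMR($p$) produces sequences $y^{(k)}=(y^{(k)}_1,\dots,y^{(k)}_n)$, $k=0,1,2,\dots$; write $z^{(k)}_t=y^{(k)}_t-x_t$. In iteration $k$: (S1) a parameter $\phi^{(k)}=(\phi^{(k)}_1,\dots,\phi^{(k)}_p)$ is obtained (normally by ordinary least squares from $z^{(k)}$; here it is the fixed $\phi$). (S2) For each $t\in\{p+1,\dots,n\}\setminus L$ compute the candidate $\hat y^{(k)}_t=\sum_{i=1}^p\phi^{(k)}_i z^{(k)}_{t-i}+x_t$; index $t$ is a candidate only if $|\hat y^{(k)}_t-y^{(k)}_t|>\tau$. (S3) If there is at least one candidate, choose a candidate $t^*$ minimizing $|\hat y^{(k)}_t-x_t|$ (ties broken arbitrarily), set $y^{(k+1)}_{t^*}=\hat y^{(k)}_{t^*}$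 and $y^{(k+1)}_t=y^{(k)}_t$ for $t\ne t^*$. If there is no candidate, the algorithm terminates and we set $y^{(k+1)}=y^{(k)}$ (so the sequence is constant from then on). In particular labeled values and the first $p$ values are never modified. *)

theory Defs
  imports Complex_Main
begin

(* Series are functions nat => real, meaningful on indices 1..n.
   The parameter phi is a function nat => real, meaningful on indices 1..p. *)

definition imr_hat :: "(nat \<Rightarrow> real) \<Rightarrow> (nat \<Rightarrow> real) \<Rightarrow> nat \<Rightarrow> (nat \<Rightarrow> real) \<Rightarrow> nat \<Rightarrow> real" where
  "imr_hat x phi p y t = (\<Sum>i=1..p. phi i * (y (t - i) - x (t - i))) + x t"

definition imr_cand :: "nat \<Rightarrow> (nat \<Rightarrow> real) \<Rightarrow> nat set \<Rightarrow> (nat \<Rightarrow> real) \<Rightarrow> nat \<Rightarrow> real \<Rightarrow> (nat \<Rightarrow> real) \<Rightarrow> nat set" where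
  "imr_cand n x L phi p tau y =
     {t \<in> {p+1..n} - L. \<bar>imr_hat x phi p y t - y t\<bar> > tau}"

(* One iteration (S2)-(S3) of IMR(p) with parameter phi; ties broken arbitrarily,
   hence a relation rather than a function. *)
definition imr_step :: "nat \<Rightarrow> (nat \<Rightarrow> real) \<Rightarrow> nat set \<Rightarrow> (nat \<Rightarrow> real) \<Rightarrow> nat \<Rightarrow> real \<Rightarrow> (nat \<Rightarrow> real) \<Rightarrow> (nat \<Rightarrow> real) \<Rightarrow> bool" where
  "imr_step n x L phi p tau y y' \<longleftrightarrow>
     (imr_cand n x L phi p tau y = {} \<and> y' = y) \<or>
     (\<exists>t \<in> imr_cand n x L phi p tau y.
        (\<forall>s \<in> imr_cand n x L phi p tau y.
           \<bar>imr_hat x phi p y t - x t\<bar> \<le> \<bar>imr_hat x phi p y s - x s\<bar>) \<and>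
        y' = y(t := imr_hat x phi p y t))"

definition imr_init :: "(nat \<Rightarrow> real) \<Rightarrow> nat set \<Rightarrow> (nat \<Rightarrow> real) \<Rightarrow> (nat \<Rightarrow> real)" where
  "imr_init x L ylab = (\<lambda>t. if t \<in> L then ylab t else x t)"

end

theory Submission
  imports Defs
begin

lemma hat_cong:
  assumes "t \<ge> 1" and "\<And>s. s < t \<Longrightarrow> y s = y' s"
  shows "imr_hat x phi p y t = imr_hat x phi p y' t"
  unfolding imr_hat_def
  by (rule arg_cong[where f="\<lambda>a. a + x t"], rule sum.cong) (use assms in auto)

lemma step_cases:
  assumes "imr_step n x L phi p tau y y'"
  shows "y' = y \<or> (\<exists>t\<in>{p+1..n} - L. y' = y(t := imr_hat x phi p y t))"
  using assms unfolding imr_step_def imr_cand_def by auto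

theorem proposition1:
  fixes n p :: nat and x ylab phi :: "nat \<Rightarrow> real" and L :: "nat set"
    and tau :: real and Y :: "nat \<Rightarrow> nat \<Rightarrow> real"
  assumes "n \<ge> 1" and "p \<ge> 1" and "tau \<ge> 0" and "L \<subseteq> {1..n}"
    and "Y 0 = imr_init x L ylab"
    and st: "\<And>k. imr_step n x L phi p tau (Y k) (Y (Suc k))"
  shows "(\<lambda>k. \<Sum>i=1..n. Y (Suc k) i - Y k i) \<longlonglongrightarrow> 0"
proof -
  let ?C = "{p+1..n} - L"
  have sc: "\<And>k. Y (Suc k) = Y k \<or> (\<exists>t\<in>?C. Y (Suc k) = (Y k)(t := imr_hat x phi p (Y k) t))"
    using step_cases[OF st] by blast
  have nc: "Y k s = Y 0 s" if "s \<notin> ?C" for k s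
  proof (induction k)
    case (Suc k)
    from sc[of k] have "Y (Suc k) s = Y k s"
    proof
      assume "\<exists>t\<in>?C. Y (Suc k) = (Y k)(t := imr_hat x phi p (Y k) t)"
      then obtain t where "t \<in> ?C" "Y (Suc k) = (Y k)(t := imr_hat x phi p (Y k) t)" by blast
      then show ?thesis using that by (cases "s = t") simp_all
    qed simp
    then show ?case using Suc by simp
  qed simp
  have P: "\<exists>K. \<forall>k\<ge>K. \<forall>s<t. Y k s = Y K s" for t
  proof (induction t)
    case 0 show ?case by simp
  next
    case (Suc t)
    then obtain K where K: "\<forall>k\<ge>K. \<forall>s<t. Y k s = Y K s" by blast
    show ?case
    proof (cases "t \<in> ?C")
      case False
      show ?thesis
      proof (intro exI[of _ K] allI impI)
        fix k s assume "k \<ge> K" "s < Suc t"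
        then show "Y k s = Y K s"
          proof (cases "s = t")
          case True then show ?thesis using nc[OF False, of k] nc[OF False, of K] by simp
        next
          case False then have "s < t" using \<open>s < Suc t\<close> by simp
          then show ?thesis using K \<open>k \<ge> K\<close> by blast
        qed
      qed
    next
      case True
      have t1: "t \<ge> 1" using True assms(2) by simp
      define h where "h = imr_hat x phi p (Y K) t"
      have hk: "imr_hat x phi p (Y k) t = h" if "k \<ge> K" for k
        unfolding h_def by (rule hat_cong[OF t1]) (use K that in blast)
      have upd: "Y (Suc k) t = Y k t \<or> Y (Suc k) t = h" if "k \<ge> K" for k
        using sc[of k]
      proof
        assume "\<exists>t'\<in>?C. Y (Suc k) = (Y k)(t' := imr_hat x phi p (Y k) t')"
        then obtain t' where "Y (Suc k) = (Y k)(t' := imr_hat x phi p (Y k) t')" by blast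
        then show ?thesis using hk[OF that] by (cases "t' = t") simp_all
      qed simp
      show ?thesis
      proof (cases "\<exists>k\<ge>K. Y k t = h")
        case True
        then obtain k0 where k0: "k0 \<ge> K" "Y k0 t = h" by blast
        have stay: "Y k t = h" if "k \<ge> k0" for k
          using that
        proof (induction k rule: dec_induct)
          case base then show ?case using k0 by simp
        next
          case (step m) then show ?case using upd[of m] k0 by auto
        qed
        show ?thesis
        proof (intro exI[of _ k0] allI impI)
          fix k s assume "k \<ge> k0" "s < Suc t"
          then show "Y k s = Y k0 s"
            proof (cases "s = t")
            case True then show ?thesis using k0 stay[of k] \<open>k \<ge> k0\<close> by simp
          next
            case False then have "s < t" using \<open>s < Suc t\<close> by simp
            then have "Y k s = Y K s" "Y k0 s = Y K s" using K \<open>k \<ge> k0\<close> k0(1) by (meson order_trans)+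
            then show ?thesis by simp
          qed
        qed
      next
        case False
        have stay: "Y k t = Y K t" if "k \<ge> K" for k
          using that
        proof (induction k rule: dec_induct)
          case base then show ?case by simp
        next
          case (step m)
          have "Y (Suc m) t \<noteq> h" using False step(1) by auto
          then show ?case using upd[of m] step by auto
        qed
        show ?thesis
        proof (intro exI[of _ K] allI impI)
          fix k s assume "k \<ge> K" "s < Suc t"
          then show "Y k s = Y K s"
            proof (cases "s = t")
            case True then show ?thesis using stay[of k] \<open>k \<ge> K\<close> by simp
          next
            case False then have "s < t" using \<open>s < Suc t\<close> by simp
            then show ?thesis using K \<open>k \<ge> K\<close> by blast
          qed
        qed
      qed
    qed
  qed
  obtain K where K: "\<forall>k\<ge>K. \<forall>s<Suc n. Y k s = Y K s" using P by blast
  have "\<forall>\<^sub>F k in sequentially. (\<Sum>i=1..n. Y (Suc k) i - Y k i) = 0"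
    unfolding eventually_sequentially
  proof (intro exI[of _ K] allI impI)
    fix k assume "k \<ge> K"
    have "\<And>i. i \<in> {1..n} \<Longrightarrow> Y (Suc k) i - Y k i = 0"
    proof -
      fix i assume "i \<in> {1..n}"
      then have i: "i < Suc n" by simp
      have "Y (Suc k) i = Y K i" using K \<open>k \<ge> K\<close> i by (meson le_SucI)
      moreover have "Y k i = Y K i" using K \<open>k \<ge> K\<close> i by blast
      ultimately show "Y (Suc k) i - Y k i = 0" by simp
    qed
    then show "(\<Sum>i=1..n. Y (Suc k) i - Y k i) = 0" by simp
  qed
  then show ?thesis by (rule tendsto_eventually)
qed

end
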